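(* For all integers $m\geq2$, $P_{m,m-1}(q)=P_{m,m-2}(q)$ and $Q_{m,m-1}(q)=Q_{m,m-2}(q)$.
   Context: $[k]=\frac{1-q^k}{1-q}$, $[k]!=\prod_{i=1}^k[i]$, $[0]!=1$. Let $S_{m,n}(q)=\sum_{k=1}^n\frac{[2k]}{[2]}[k]^{m-1}q^{\frac{m+1}{2}(n-k)}$. The polynomials $P_{m,j},Q_{m,j}\in\mathbb{Z}[q]$ are those (shown to exist by Guo and Zeng, and uniquely determined) such that for all $n\ge1$: $S_{2m+1,n}(q)=\sum_{k=0}^m(-q^n)^{m-k}\frac{[k]!}{[m+1]!}P_{m,m-k}(q)\frac{([n][n+1])^{k+1}}{[2]}$ for $m\ge0$, and $S_{2m,n}(q)=(1-q^{n+\frac12})\sum_{k=0}^m(-q^n)^{m-k}\frac{(1-q^{\frac12})^{m-k}Q_{m,m-k}(q^{\frac12})}{\prod_{i=0}^{m-k}(1-q^{m-i+\frac12})}\frac{([n][n+1])^k}{[2]}$ for $m\ge1$. *)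

theory Defs
  imports Complex_Main "HOL-Computational_Algebra.Polynomial"
begin

definition qint :: "nat \<Rightarrow> real \<Rightarrow> real" where
  "qint k q = (1 - q ^ k) / (1 - q)"

definition qfact :: "nat \<Rightarrow> real \<Rightarrow> real" where
  "qfact k q = (\<Prod>i=1..k. qint i q)"

definition Ssum :: "nat \<Rightarrow> nat \<Rightarrow> real \<Rightarrow> real" where
  "Ssum m n q = (\<Sum>k=1..n. qint (2*k) q / qint 2 q * qint k q ^ (m - 1)
                   * q powr ((real m + 1) / 2 * (real n - real k)))"

definition evalp :: "int poly \<Rightarrow> real \<Rightarrow> real" where
  "evalp p x = poly (map_poly of_int p) x"

text \<open>The defining identity of the family P_{m,0..m} (odd case), for all n \<ge> 1,
  as an identity of functions of q on (0,1) (equivalently, of rational functions in q).\<close>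

definition P_family :: "nat \<Rightarrow> (nat \<Rightarrow> int poly) \<Rightarrow> bool" where
  "P_family m P \<longleftrightarrow> (\<forall>n\<ge>1. \<forall>q::real. 0 < q \<and> q < 1 \<longrightarrow>
     Ssum (2*m+1) n q =
       (\<Sum>k=0..m. (- (q ^ n)) ^ (m - k) * qfact k q / qfact (m+1) q * evalp (P (m - k)) q
          * (qint n q * qint (n+1) q) ^ (k+1) / qint 2 q))"

definition Q_family :: "nat \<Rightarrow> (nat \<Rightarrow> int poly) \<Rightarrow> bool" where
  "Q_family m Q \<longleftrightarrow> (\<forall>n\<ge>1. \<forall>q::real. 0 < q \<and> q < 1 \<longrightarrow>
     Ssum (2*m) n q =
       (1 - q powr (real n + 1/2)) *
       (\<Sum>k=0..m. (- (q ^ n)) ^ (m - k) * (1 - q powr (1/2)) ^ (m - k)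
          * evalp (Q (m - k)) (q powr (1/2))
          / (\<Prod>i=0..m-k. (1 - q powr (real m - real i + 1/2)))
          * (qint n q * qint (n+1) q) ^ k / qint 2 q))"

definition Ppoly :: "nat \<Rightarrow> nat \<Rightarrow> int poly" where
  "Ppoly m j = (THE p. \<exists>P. P_family m P \<and> P j = p)"

definition Qpoly :: "nat \<Rightarrow> nat \<Rightarrow> int poly" where
  "Qpoly m j = (THE p. \<exists>Q. Q_family m Q \<and> Q j = p)"

end

theory Submission
  imports Defs
begin


named_theorems polyfun_intros

definition polyfun :: "(real \<Rightarrow> real) \<Rightarrow> bool" where
  "polyfun f \<longleftrightarrow> (\<exists>p. \<forall>x. f x = poly p x)"

lemma polyfun_const[intro, polyfun_intros]: "polyfun (\<lambda>x. c)"
  unfolding polyfun_def by (rule exI[of _ "[:c:]"]) simp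

lemma polyfun_id[intro, polyfun_intros]: "polyfun (\<lambda>x. x)"
  unfolding polyfun_def by (rule exI[of _ "[:0,1:]"]) simp

lemma polyfun_add[intro, polyfun_intros]: "polyfun f \<Longrightarrow> polyfun g \<Longrightarrow> polyfun (\<lambda>x. f x + g x)"
  unfolding polyfun_def by (metis poly_add)

lemma polyfun_diff[intro, polyfun_intros]: "polyfun f \<Longrightarrow> polyfun g \<Longrightarrow> polyfun (\<lambda>x. f x - g x)"
  unfolding polyfun_def by (metis poly_diff)

lemma polyfun_mult[intro, polyfun_intros]: "polyfun f \<Longrightarrow> polyfun g \<Longrightarrow> polyfun (\<lambda>x. f x * g x)"
  unfolding polyfun_def by (metis poly_mult)

lemma polyfun_uminus[intro, polyfun_intros]: "polyfun f \<Longrightarrow> polyfun (\<lambda>x. - f x)"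
  unfolding polyfun_def by (metis poly_minus)

lemma polyfun_divc[intro, polyfun_intros]: "polyfun f \<Longrightarrow> polyfun (\<lambda>x. f x / c)"
proof -
  assume "polyfun f"
  then have "polyfun (\<lambda>x. f x * (1/c))" by (intro polyfun_mult polyfun_const)
  then show ?thesis by simp
qed

lemma polyfun_power[intro, polyfun_intros]: "polyfun f \<Longrightarrow> polyfun (\<lambda>x. f x ^ n)"
  by (induction n) (auto simp del: power_Suc simp: power_Suc)

lemma polyfun_comp: "polyfun f \<Longrightarrow> polyfun g \<Longrightarrow> polyfun (\<lambda>x. f (g x))"
  unfolding polyfun_def by (metis poly_pcompose)

lemma polyfun_sum[intro, polyfun_intros]: "(\<And>k. k \<in> A \<Longrightarrow> polyfun (f k)) \<Longrightarrow> polyfun (\<lambda>x. \<Sum>k\<in>A. f k x)"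
proof (induction A rule: infinite_finite_induct)
  case (insert a A)
  then have "polyfun (\<lambda>x. f a x + (\<Sum>k\<in>A. f k x))" by (intro polyfun_add) auto
  then show ?case using insert by simp
qed auto

lemma polyfun_eq:
  assumes "polyfun f" "polyfun g" "infinite S" "\<And>x. x \<in> S \<Longrightarrow> f x = g x"
  shows "f y = g y"
proof -
  obtain p where p: "\<And>x. f x = poly p x" using assms(1) unfolding polyfun_def by blast
  obtain r where r: "\<And>x. g x = poly r x" using assms(2) unfolding polyfun_def by blast
  have "S \<subseteq> {x. poly (p - r) x = 0}" using assms(4) p r by auto
  then have "infinite {x. poly (p - r) x = 0}" using assms(3) finite_subset by blast
  then have "p - r = 0" using poly_roots_finite by blast
  then show ?thesis using p r by simp
qed

lemma infinite_qpow:
  fixes q :: real assumes "0 < q" "q < 1"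
  shows "infinite {q ^ n | n. n \<ge> 1}"
proof -
  have "inj (\<lambda>n. q ^ Suc n)"
  proof (rule injI)
    fix x y assume "q ^ Suc x = q ^ Suc y"
    then show "x = y" using assms
      by (metis Suc_inject less_irrefl nat_neq_iff power_strict_decreasing)
  qed
  then have "infinite (range (\<lambda>n. q ^ Suc n))" by (rule range_inj_infinite)
  moreover have "range (\<lambda>n. q ^ Suc n) \<subseteq> {q ^ n | n. n \<ge> 1}"
  proof
    fix y assume "y \<in> range (\<lambda>n. q ^ Suc n)"
    then obtain x where "y = q ^ Suc x" by blast
    then show "y \<in> {q ^ n | n. n \<ge> 1}" by (intro CollectI exI[of _ "Suc x"]) simp
  qed
  ultimately show ?thesis using finite_subset by blast
qed

lemma infinite_ne1: "infinite {x::real. x \<noteq> 1}"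
proof
  assume "finite {x::real. x \<noteq> 1}"
  then have "finite ({x::real. x \<noteq> 1} \<union> {1})" by simp
  moreover have "{x::real. x \<noteq> 1} \<union> {1} = UNIV" by auto
  ultimately show False by (simp add: infinite_UNIV_char_0)
qed

lemma evalp_eq:
  assumes "\<And>q. 0 < q \<Longrightarrow> q < 1 \<Longrightarrow> evalp a q = evalp b q"
  shows "a = b"
proof -
  have "polyfun (\<lambda>x. evalp a x)" "polyfun (\<lambda>x. evalp b x)" unfolding polyfun_def evalp_def by auto
  then have "\<And>y. evalp a y = evalp b y"
    by (rule polyfun_eq[where S="{0<..<1}"]) (auto simp: assms)
  then have "map_poly (of_int :: int \<Rightarrow> real) a = map_poly of_int b"
    unfolding evalp_def by (simp add: poly_eq_poly_eq_iff[symmetric] fun_eq_iff)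
  then have "\<forall>n. coeff (map_poly (of_int :: int \<Rightarrow> real) a) n = coeff (map_poly of_int b) n" by simp
  then show ?thesis by (simp add: coeff_map_poly poly_eq_iff)
qed

lemma Ssum_Suc:
  assumes "0 < q"
  shows "Ssum M (Suc n) q = q powr ((real M + 1) / 2) * Ssum M n q
     + qint (2 * Suc n) q / qint 2 q * qint (Suc n) q ^ (M - 1)"
proof -
  have "Ssum M (Suc n) q = (\<Sum>k=1..n. qint (2*k) q / qint 2 q * qint k q ^ (M - 1)
                   * q powr ((real M + 1) / 2 * (real (Suc n) - real k)))
       + qint (2 * Suc n) q / qint 2 q * qint (Suc n) q ^ (M - 1)"
    unfolding Ssum_def using assms by simp
  also have "(\<Sum>k=1..n. qint (2*k) q / qint 2 q * qint k q ^ (M - 1)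
                   * q powr ((real M + 1) / 2 * (real (Suc n) - real k)))
     = (\<Sum>k=1..n. q powr ((real M + 1) / 2) * (qint (2*k) q / qint 2 q * qint k q ^ (M - 1)
                   * q powr ((real M + 1) / 2 * (real n - real k))))"
  proof (rule sum.cong)
    fix k assume "k \<in> {1..n}"
    have "(real M + 1) / 2 * (real (Suc n) - real k) = (real M + 1) / 2 + (real M + 1) / 2 * (real n - real k)"
      by (simp add: field_simps)
    then have e: "q powr ((real M + 1) / 2 * (real (Suc n) - real k)) = q powr ((real M + 1) / 2) * q powr ((real M + 1) / 2 * (real n - real k))"
      by (simp only: powr_add)
    show "qint (2*k) q / qint 2 q * qint k q ^ (M - 1)
                   * q powr ((real M + 1) / 2 * (real (Suc n) - real k)) = q powr ((real M + 1) / 2) * (qint (2*k) q / qint 2 q * qint k q ^ (M - 1)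
                   * q powr ((real M + 1) / 2 * (real n - real k)))"
      unfolding e by (simp add: mult_ac)
  qed simp
  finally show ?thesis unfolding Ssum_def by (simp add: sum_distrib_left)
qed



lemma alg1: "(a::real) \<noteq> 0 \<Longrightarrow> a * b * (s * y / a * c * S / D) = s * y * c * (b * S) / D"
  by (simp add: field_simps)

lemma alg2: "(s::real) * y * c * ((U*W)^n / E) / D - s * y * c * ((V*W)^n / E) / D
   = s * c / E / D * (y * W^n * (U^n - V^n))"
  by (simp add: power_mult_distrib divide_inverse algebra_simps)

lemma alg3: "(1 - (x::real)^2)/a/D*((1-x)^2*Y/c) = (1-x)^3*((1+x)/a/D*Y/c)"
  by (simp add: power2_eq_square power3_eq_cube divide_inverse algebra_simps)

lemma qfact_pos: "0 < (q::real) \<Longrightarrow> q < 1 \<Longrightarrow> 0 < qfact k q"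
  unfolding qfact_def
proof (rule prod_pos)
  fix i assume "0 < q" "q < 1" "i \<in> {1..k}"
  then have "q ^ Suc (i-1) < 1" by (intro power_Suc_less_one)
  moreover have "Suc (i-1) = i" using \<open>i \<in> {1..k}\<close> by simp
  ultimately have "q ^ i < 1" by metis
  then show "0 < qint i q" unfolding qint_def using \<open>q < 1\<close> by simp
qed

lemma alg4:
  fixes a b F :: real assumes "a \<noteq> 0" "b \<noteq> 0" "F \<noteq> 0"
  shows "- s * A / F / a^4 / b * ((a*b)*2) + s * (b * Bv) / F / a^6 / b * (2*a^3) = 2 * s / (F * a^3) * (Bv - A)"
proof -
  have "- s * A / F / a^4 / b * ((a*b)*2) = - 2 * s * A / (F * a^3)"
    using assms by (simp add: field_simps power_numeral_reduce)
  moreover have "s * (b * Bv) / F / a^6 / b * (2*a^3) = 2 * s * Bv / (F * a^3)"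
    using assms by (simp add: field_simps power_numeral_reduce)
  ultimately show ?thesis by (simp only:) (simp add: divide_inverse algebra_simps)
qed

lemma P_main:
  fixes P :: "nat \<Rightarrow> int poly" and q :: real
  assumes m2: "m \<ge> 2" and fam: "P_family m P" and q0: "0 < q" and q1: "q < 1"
  shows "evalp (P (m-1)) q = evalp (P (m-2)) q"
proof -
  define C where "C k = qfact k q / qfact (m+1) q * evalp (P (m-k)) q" for k
  define Rf where "Rf x = (\<Sum>k=0..m. (-x)^(m-k) * C k * ((1-x)/(1-q) * ((1-q*x)/(1-q)))^(k+1) / ((1-q^2)/(1-q)))" for x
  define g where "g x = (1-x^2)/(1-q)/((1-q^2)/(1-q)) * ((1-x)/(1-q))^(2*m)" for x
  have famR: "Ssum (2*m+1) n q = Rf (q^n)" if "n \<ge> 1" for n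
  proof -
    have "Ssum (2*m+1) n q =
       (\<Sum>k=0..m. (- (q ^ n)) ^ (m - k) * qfact k q / qfact (m+1) q * evalp (P (m - k)) q
          * (qint n q * qint (n+1) q) ^ (k+1) / qint 2 q)"
      using fam that q0 q1 unfolding P_family_def by blast
    also have "\<dots> = Rf (q^n)" unfolding Rf_def
      by (rule sum.cong) (simp_all add: qint_def C_def)
    finally show ?thesis .
  qed
  have rec: "Rf (q * y) = q^(m+1) * Rf y + g (q * y)" if yS: "y \<in> {q ^ n | n. n \<ge> 1}" for y
  proof -
    obtain n where n: "y = q^n" "n \<ge> 1" using yS by blast
    have e1: "(real (2*m+1) + 1) / 2 = real (m+1)" by simp
    have "Ssum (2*m+1) (Suc n) q = q powr ((real (2*m+1) + 1) / 2) * Ssum (2*m+1) n q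
     + qint (2 * Suc n) q / qint 2 q * qint (Suc n) q ^ (2*m+1 - 1)"
      by (rule Ssum_Suc[OF q0])
    also have "q powr ((real (2*m+1) + 1) / 2) = q^(m+1)"
      unfolding e1 using q0 by (rule powr_realpow)
    also have "qint (2 * Suc n) q / qint 2 q * qint (Suc n) q ^ (2*m+1 - 1) = g (q * y)"
    proof -
      have "(q * q^n)^2 = q^(2*Suc n)" by (metis power_Suc power_mult mult.commute)
      then show ?thesis unfolding g_def qint_def n by simp
    qed
    finally show ?thesis using famR[of "Suc n"] famR[of n] n by simp
  qed
  have all: "Rf (q * y) = q^(m+1) * Rf y + g (q * y)" for y
    by (rule polyfun_eq[where S="{q ^ n | n. n \<ge> 1}", OF _ _ infinite_qpow[OF q0 q1] rec])
       (unfold Rf_def g_def, (intro polyfun_intros)+)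
  have all2: "Rf x - q^(m+1) * Rf (x/q) = g x" for x
    using all[of "x/q"] q0 by simp
  define w where "w k = (-1)^(m-k) * C k / (1-q)^(2*(k+1)) / ((1-q^2)/(1-q))" for k
  define B where "B k x = (1-q*x)^(k+1) - (q-x)^(k+1)" for k x
  have termk: "(-x)^(m-k) * C k * ((1-x)/(1-q) * ((1-q*x)/(1-q)))^(k+1) / ((1-q^2)/(1-q))
     - q^(m+1) * ((-(x/q))^(m-k) * C k * ((1-(x/q))/(1-q) * ((1-q*(x/q))/(1-q)))^(k+1) / ((1-q^2)/(1-q)))
     = w k * (x^(m-k) * (1-x)^(k+1) * B k x)" if "k \<le> m" for k x
  proof -
    define j where "j = m - k"
    have mj: "m + 1 = j + (k+1)" using that j_def by simp
    have a1: "(-x)^(m-k) = (-1)^j * x^j" unfolding j_def by (rule power_minus)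
    have a2: "(-(x/q))^(m-k) = (-1)^j * x^j / q^j" unfolding j_def power_minus[of "x/q"] power_divide by simp
    have a3: "q^(m+1) = q^j * q^(k+1)" unfolding mj by (rule power_add)
    have a4: "q^(k+1) * ((1-(x/q))/(1-q) * ((1-q*(x/q))/(1-q)))^(k+1) = ((q-x) * (1-x))^(k+1) / (1-q)^(2*(k+1))"
    proof -
      have e1: "1 - x/q = (q-x)/q" "q*(x/q) = x" using q0 by (simp_all add: field_simps)
      have "q * ((1-(x/q))/(1-q) * ((1-q*(x/q))/(1-q))) = (q-x) * (1-x) / (1-q)^2"
        unfolding e1 using q0 by (simp add: power2_eq_square)
      then have "(q * ((1-(x/q))/(1-q) * ((1-q*(x/q))/(1-q))))^(k+1) = ((q-x) * (1-x) / (1-q)^2)^(k+1)" by simp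
      moreover have "(q * ((1-(x/q))/(1-q) * ((1-q*(x/q))/(1-q))))^(k+1) = q^(k+1) * ((1-(x/q))/(1-q) * ((1-q*(x/q))/(1-q)))^(k+1)"
        by (rule power_mult_distrib)
      moreover have "((q-x) * (1-x) / (1-q)^2)^(k+1) = ((q-x) * (1-x))^(k+1) / (1-q)^(2*(k+1))"
        by (simp only: power_divide power_mult)
      ultimately show ?thesis by simp
    qed
    have a5: "((1-x)/(1-q) * ((1-q*x)/(1-q)))^(k+1) = ((1-q*x) * (1-x))^(k+1) / (1-q)^(2*(k+1))"
    proof -
      have "(1-x)/(1-q) * ((1-q*x)/(1-q)) = (1-q*x) * (1-x) / (1-q)^2"
        using q0 q1 by (simp add: field_simps power2_eq_square)
      moreover have "((1-q*x) * (1-x) / (1-q)^2)^(k+1) = ((1-q*x) * (1-x))^(k+1) / (1-q)^(2*(k+1))"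
        by (simp only: power_divide power_mult)
      ultimately show ?thesis by simp
    qed
    have "q^(m+1) * ((-(x/q))^(m-k) * C k * ((1-(x/q))/(1-q) * ((1-q*(x/q))/(1-q)))^(k+1) / ((1-q^2)/(1-q)))
       = (-1)^j * x^j * C k * (q^(k+1) * ((1-(x/q))/(1-q) * ((1-q*(x/q))/(1-q)))^(k+1)) / ((1-q^2)/(1-q))"
      unfolding a2 a3 by (rule alg1) (use q0 in simp)
    also have "\<dots> = (-1)^j * x^j * C k * (((q-x) * (1-x))^(k+1) / (1-q)^(2*(k+1))) / ((1-q^2)/(1-q))"
      unfolding a4 ..
    finally have b: "q^(m+1) * ((-(x/q))^(m-k) * C k * ((1-(x/q))/(1-q) * ((1-q*(x/q))/(1-q)))^(k+1) / ((1-q^2)/(1-q)))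
       = (-1)^j * x^j * C k * (((q-x) * (1-x))^(k+1) / (1-q)^(2*(k+1))) / ((1-q^2)/(1-q))" .
    show ?thesis unfolding b a1 a5 unfolding w_def B_def j_def[symmetric]
      by (rule alg2)
  qed
  have main: "(\<Sum>k=0..m. w k * (x^(m-k) * (1-x)^(k+1) * B k x)) = g x" for x
  proof -
    have "g x = Rf x - q^(m+1) * Rf (x/q)" using all2 by simp
    also have "\<dots> = (\<Sum>k=0..m. w k * (x^(m-k) * (1-x)^(k+1) * B k x))"
      unfolding Rf_def sum_distrib_left sum_subtractf[symmetric]
      by (rule sum.cong[OF refl], rule termk, simp)
    finally show ?thesis by simp
  qed
  define G1 where "G1 x = (1+x)/(1-q)/((1-q^2)/(1-q)) * ((1-x)/(1-q))^(2*m)" for x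
  have s1: "(\<Sum>k=0..m. w k * (x^(m-k) * (1-x)^k * B k x)) = G1 x" if "x \<in> {x. x \<noteq> 1}" for x
  proof -
    have "(1-x) * (\<Sum>k=0..m. w k * (x^(m-k) * (1-x)^k * B k x)) = (\<Sum>k=0..m. w k * (x^(m-k) * (1-x)^(k+1) * B k x))"
      unfolding sum_distrib_left by (rule sum.cong) (simp_all add: mult_ac)
    also have "\<dots> = (1-x) * G1 x" unfolding main g_def G1_def
      by (simp add: power2_eq_square field_simps)
    finally show ?thesis using that by simp
  qed
  have s1': "(\<Sum>k=0..m. w k * (1^(m-k) * (1-1)^k * B k 1)) = G1 1"
    by (rule polyfun_eq[where S="{x. x \<noteq> 1}", OF _ _ infinite_ne1 s1])
       (unfold G1_def B_def, (intro polyfun_intros)+)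
  have "(\<Sum>k=0..m. w k * (1^(m-k) * (1-1)^k * B k 1)) = w 0 * B 0 1"
  proof -
    have "(\<Sum>k=Suc 0..m. w k * (0^k * B k 1)) = 0" by (rule sum.neutral) auto
    then show ?thesis by (simp add: sum.atLeast_Suc_atMost)
  qed
  moreover have "G1 1 = 0" unfolding G1_def using m2 by simp
  moreover have "B 0 1 = 2 * (1-q)" unfolding B_def by simp
  ultimately have w0: "w 0 = 0" using s1' q1 by simp
  define G2 where "G2 x = (1+x)/(1-q)/((1-q^2)/(1-q)) * (1-x)^(2*m-2)/(1-q)^(2*m)" for x
  define H2 where "H2 x = w 1 * (x^(m-1)*(1-q^2)*(1+x)) + (\<Sum>k=2..m. w k * (x^(m-k)*(1-x)^(k-2)*B k x))" for x
  have s2: "(1-x)^3 * H2 x = (1-x)^3 * G2 x" for x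
  proof -
    have B1: "B 1 x = (1-q^2)*(1-x)*(1+x)" unfolding B_def by (simp add: power2_eq_square algebra_simps)
    have T1: "x^(m-1) * (1-x)^(1+1) * B 1 x = (1-x)^3 * (x^(m-1)*(1-q^2)*(1+x))"
      unfolding B1 by (simp add: power2_eq_square power3_eq_cube mult_ac)
    have Tk: "w k * (x^(m-k) * (1-x)^(k+1) * B k x) = (1-x)^3 * (w k * (x^(m-k)*(1-x)^(k-2)*B k x))"
      if "k \<in> {2..m}" for k
    proof -
      have "(1-x)^(k+1) = (1-x)^3 * (1-x)^(k-2)" using that by (simp add: power_add[symmetric])
      then show ?thesis by simp
    qed
    have split: "(\<Sum>k=0..m. w k * (x^(m-k) * (1-x)^(k+1) * B k x))
      = w 0 * (x^(m-0) * (1-x)^(0+1) * B 0 x) + w 1 * (x^(m-1) * (1-x)^(1+1) * B 1 x)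
        + (\<Sum>k=2..m. w k * (x^(m-k) * (1-x)^(k+1) * B k x))"
    proof -
      have "{0..m} = insert 0 (insert 1 {2..m})" using m2 by auto
      then show ?thesis by simp
    qed
    have "(1-x)^3 * H2 x = (\<Sum>k=0..m. w k * (x^(m-k) * (1-x)^(k+1) * B k x))"
    proof -
      have "(\<Sum>k=2..m. w k * (x^(m-k) * (1-x)^(k+1) * B k x)) = (\<Sum>k=2..m. (1-x)^3 * (w k * (x^(m-k)*(1-x)^(k-2)*B k x)))"
        by (rule sum.cong[OF refl], rule Tk)
      then show ?thesis unfolding split w0 H2_def T1 sum_distrib_left distrib_left by simp
    qed
    also have "\<dots> = g x" by (rule main)
    also have "\<dots> = (1-x)^3 * G2 x"
    proof -
      have e: "2*m = 2 + (2*m-2)" using m2 by simp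
      have "(1-x)^(2*m) = (1-x)^2 * (1-x)^(2*m-2)" by (metis e power_add)
      then show ?thesis unfolding g_def G2_def power_divide
        by (simp only: alg3)
    qed
    finally show ?thesis .
  qed
  have s2x: "H2 x = G2 x" if "x \<in> {x. x \<noteq> 1}" for x
    using s2[of x] that by simp
  have s2': "H2 1 = G2 1"
    by (rule polyfun_eq[where S="{x. x \<noteq> 1}", OF _ _ infinite_ne1 s2x])
       (unfold G2_def H2_def B_def, (intro polyfun_intros)+)
  have "H2 1 = w 1 * ((1-q^2)*2) + w 2 * B 2 1"
  proof -
    have "{2..m} = insert 2 {3..m}" using m2 by auto
    moreover have "(\<Sum>k=3..m. w k * (1^(m-k)*(1-1)^(k-2)*B k 1)) = 0" by (rule sum.neutral) auto
    ultimately show ?thesis unfolding H2_def by simp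
  qed
  moreover have "G2 1 = 0" unfolding G2_def using m2 by simp
  moreover have "B 2 1 = 2*(1-q)^3" unfolding B_def by (simp add: power3_eq_cube algebra_simps)
  ultimately have key: "w 1 * ((1-q^2)*2) + w 2 * (2*(1-q)^3) = 0" using s2' by simp
  define sg :: real where "sg = (-1)^(m-2)"
  define F where "F = qfact (m+1) q"
  define A where "A = evalp (P (m-1)) q"
  define Bv where "Bv = evalp (P (m-2)) q"
  have sg1: "(-1::real)^(m-1) = - sg" unfolding sg_def
  proof -
    have "m - 1 = Suc (m-2)" using m2 by simp
    then show "(-1::real)^(m-1) = - ((-1::real)^(m-2))" by simp
  qed
  have sg0: "sg \<noteq> 0" unfolding sg_def by simp
  have F0: "F \<noteq> 0" unfolding F_def using qfact_pos[OF q0 q1] by (metis less_irrefl)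
  have D: "(1-q^2)/(1-q) = 1+q" using q1 by (simp add: power2_eq_square field_simps)
  have qf1: "qfact 1 q = 1" using q1 by (simp add: qfact_def qint_def)
  have qf2: "qfact 2 q = 1+q" using q1 by (simp add: qfact_def qint_def numeral_2_eq_2 power2_eq_square field_simps)
  have w1: "w 1 = - sg * A / F / (1-q)^4 / (1+q)"
    unfolding w_def C_def sg1 qf1 D A_def F_def by simp
  have w2: "w 2 = sg * ((1+q) * Bv) / F / (1-q)^6 / (1+q)"
    unfolding w_def C_def sg_def qf2 D Bv_def F_def by simp
  have "w 1 * ((1-q^2)*2) + w 2 * (2*(1-q)^3) = 2 * sg / (F * (1-q)^3) * (Bv - A)"
  proof -
    have e: "1 - q^2 = (1-q)*(1+q)" by (simp add: power2_eq_square algebra_simps)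
    have a0: "1 - q \<noteq> 0" "1 + q \<noteq> 0" using q0 q1 by auto
    show ?thesis unfolding w1 w2 e using alg4[OF a0 F0] by simp
  qed
  then have "2 * sg / (F * (1-q)^3) * (Bv - A) = 0" using key by simp
  then have "Bv = A" using sg0 F0 q1 by simp
  then show ?thesis unfolding A_def Bv_def by simp
qed

lemma powr_half_nat: "0 < (p::real) \<Longrightarrow> (p^2) powr (real N / 2) = p^N"
proof -
  assume p: "0 < p"
  have e: "p^2 = p powr 2" using p by simp
  have "(p^2) powr (real N / 2) = (p powr 2) powr (real N / 2)" by (simp only: e)
  also have "\<dots> = p powr (2 * (real N / 2))" by (rule powr_powr)
  also have "\<dots> = p powr (real N)" by simp
  also have "\<dots> = p^N" using p by (rule powr_realpow)
  finally show ?thesis .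
qed

lemma alg1q: "(a::real) \<noteq> 0 \<Longrightarrow> a * b * (c * (s * y / a * K * S)) = s * y * K * (b * (c * S))"
  by (simp add: field_simps)

lemma alg5: "(1-(p::real)*x) * (s * y * K * ((U*W)^k / E)) - s * y * K * ((V * (Z*W)^k) / E)
   = s * K / E * (y * W^k * ((1-p*x)*U^k - V*Z^k))"
  by (simp add: power_mult_distrib divide_inverse algebra_simps)

lemma alg6: "(1 - (x::real)^2)/a/D*((1-x)*Y/c) = (1-x)^2*((1+x)/a/D*(Y/c))"
  by (simp add: power2_eq_square divide_inverse algebra_simps)

lemma alg7:
  fixes a c d P D Z :: real assumes "a \<noteq> 0" "c \<noteq> 0" "d \<noteq> 0" "P \<noteq> 0" "D \<noteq> 0"
  shows "- s * (a * Z * A / (P * c) / D) / d^2 * (c*2) + s * (Z * Bv / P / D) / d^4 * (2*a*d^2)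
       = 2*s*a*Z/(P*D*d^2)*(Bv - A)"
proof -
  have "- s * (a * Z * A / (P * c) / D) / d^2 * (c*2) = - 2*s*a*Z*A/(P*D*d^2)"
    using assms by (simp add: field_simps)
  moreover have "s * (Z * Bv / P / D) / d^4 * (2*a*d^2) = 2*s*a*Z*Bv/(P*D*d^2)"
    using assms by (simp add: field_simps power_numeral_reduce)
  ultimately show ?thesis by (simp only:) (simp add: divide_inverse algebra_simps)
qed

lemma Q_main:
  fixes Q :: "nat \<Rightarrow> int poly" and p :: real
  assumes m2: "m \<ge> 2" and fam: "Q_family m Q" and p0: "0 < p" and p1: "p < 1"
  shows "evalp (Q (m-1)) p = evalp (Q (m-2)) p"
proof -
  define q where "q = p^2"
  have q0: "0 < q" and q1: "q < 1" unfolding q_def using p0 p1 by (auto simp: power_less_one_iff)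
  define K where "K k = (1-p)^(m-k) * evalp (Q (m-k)) p / (\<Prod>i=0..m-k. (1 - p^(2*(m-i)+1))) / ((1-q^2)/(1-q))" for k
  define Rf where "Rf x = (1 - p*x) * (\<Sum>k=0..m. (-x)^(m-k) * K k * ((1-x)/(1-q) * ((1-q*x)/(1-q)))^k)" for x
  define g where "g x = (1-x^2)/(1-q)/((1-q^2)/(1-q)) * ((1-x)/(1-q))^(2*m-1)" for x
  have hp: "q powr (1/2) = p"
    using powr_half_nat[OF p0, of 1] unfolding q_def by simp
  have hn: "q powr (real n + 1/2) = p * q^n" for n
  proof -
    have "real n + 1/2 = real (2*n+1) / 2" by simp
    then have "q powr (real n + 1/2) = p^(2*n+1)" unfolding q_def by (simp only: powr_half_nat[OF p0])
    then show ?thesis unfolding q_def by (simp add: power_mult)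
  qed
  have hi: "q powr (real m - real i + 1/2) = p^(2*(m-i)+1)" if "i \<le> m" for i
  proof -
    have "real m - real i + 1/2 = real (2*(m-i)+1) / 2" using that by (simp add: of_nat_diff)
    then show ?thesis unfolding q_def by (simp only: powr_half_nat[OF p0])
  qed
  have famR: "Ssum (2*m) n q = Rf (q^n)" if "n \<ge> 1" for n
  proof -
    have "Ssum (2*m) n q =
       (1 - q powr (real n + 1/2)) *
       (\<Sum>k=0..m. (- (q ^ n)) ^ (m - k) * (1 - q powr (1/2)) ^ (m - k)
          * evalp (Q (m - k)) (q powr (1/2))
          / (\<Prod>i=0..m-k. (1 - q powr (real m - real i + 1/2)))
          * (qint n q * qint (n+1) q) ^ k / qint 2 q)"
      using fam that q0 q1 unfolding Q_family_def by blast
    also have "\<dots> = Rf (q^n)" unfolding Rf_def hn hp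
    proof (intro arg_cong2[where f="(*)"] refl sum.cong)
      fix k assume k: "k \<in> {0..m}"
      have "(\<Prod>i=0..m-k. (1 - q powr (real m - real i + 1/2))) = (\<Prod>i=0..m-k. (1 - p^(2*(m-i)+1)))"
        by (rule prod.cong) (auto simp: hi)
      then show "(- (q ^ n)) ^ (m - k) * (1 - p) ^ (m - k) * evalp (Q (m - k)) p
          / (\<Prod>i=0..m-k. (1 - q powr (real m - real i + 1/2)))
          * (qint n q * qint (n+1) q) ^ k / qint 2 q
        = (-(q^n))^(m-k) * K k * ((1-q^n)/(1-q) * ((1-q*q^n)/(1-q)))^k"
        unfolding K_def by (simp add: qint_def)
    qed
    finally show ?thesis .
  qed
  have rec: "Rf (q * y) = p^(2*m+1) * Rf y + g (q * y)" if yS: "y \<in> {q ^ n | n. n \<ge> 1}" for y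
  proof -
    obtain n where n: "y = q^n" "n \<ge> 1" using yS by blast
    have e1: "(real (2*m) + 1) / 2 = real (2*m+1) / 2" by simp
    have "Ssum (2*m) (Suc n) q = q powr ((real (2*m) + 1) / 2) * Ssum (2*m) n q
     + qint (2 * Suc n) q / qint 2 q * qint (Suc n) q ^ (2*m - 1)"
      by (rule Ssum_Suc[OF q0])
    also have "q powr ((real (2*m) + 1) / 2) = p^(2*m+1)"
      unfolding e1 q_def by (rule powr_half_nat[OF p0])
    also have "qint (2 * Suc n) q / qint 2 q * qint (Suc n) q ^ (2*m - 1) = g (q * y)"
    proof -
      have "(q * q^n)^2 = q^(2*Suc n)" by (metis power_Suc power_mult mult.commute)
      then show ?thesis unfolding g_def qint_def n by simp
    qed
    finally show ?thesis using famR[of "Suc n"] famR[of n] n by simp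
  qed
  have all: "Rf (q * y) = p^(2*m+1) * Rf y + g (q * y)" for y
    by (rule polyfun_eq[where S="{q ^ n | n. n \<ge> 1}", OF _ _ infinite_qpow[OF q0 q1] rec])
       (unfold Rf_def g_def, (intro polyfun_intros)+)
  have all2: "Rf x - p^(2*m+1) * Rf (x/q) = g x" for x
    using all[of "x/q"] q0 by simp
  define w where "w k = (-1)^(m-k) * K k / (1-q)^(2*k)" for k
  define B where "B k x = (1-p*x)*(1-q*x)^k - (p-x)*(q-x)^k" for k x
  have termk: "(1-p*x)*((-x)^(m-k) * K k * ((1-x)/(1-q) * ((1-q*x)/(1-q)))^k)
     - p^(2*m+1)*((1-p*(x/q))*((-(x/q))^(m-k) * K k * ((1-(x/q))/(1-q) * ((1-q*(x/q))/(1-q)))^k))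
     = w k * (x^(m-k)*(1-x)^k*B k x)" if "k \<le> m" for k x
  proof -
    define j where "j = m - k"
    have mj: "2*m+1 = 2*j + 2*k + 1" using that j_def by simp
    have a1: "(-x)^(m-k) = (-1)^j * x^j" unfolding j_def by (rule power_minus)
    have a2: "(-(x/q))^(m-k) = (-1)^j * x^j / q^j" unfolding j_def power_minus[of "x/q"] power_divide by simp
    have a3: "p^(2*m+1) = q^j * (p * q^k)" unfolding mj q_def
      by (simp add: power_add power_mult)
    have a4: "p * q^k * ((1-p*(x/q)) * ((1-(x/q))/(1-q) * ((1-q*(x/q))/(1-q)))^k) = (p-x) * ((q-x) * (1-x))^k / (1-q)^(2*k)"
    proof -
      have e1: "1 - x/q = (q-x)/q" "q*(x/q) = x" using q0 by (simp_all add: field_simps)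
      have e2: "p*(1-p*(x/q)) = p - x" unfolding q_def using p0 by (simp add: field_simps power2_eq_square)
      have "q * ((1-(x/q))/(1-q) * ((1-q*(x/q))/(1-q))) = (q-x) * (1-x) / (1-q)^2"
        unfolding e1 using q0 by (simp add: power2_eq_square)
      then have "(q * ((1-(x/q))/(1-q) * ((1-q*(x/q))/(1-q))))^k = ((q-x) * (1-x) / (1-q)^2)^k" by simp
      moreover have "(q * ((1-(x/q))/(1-q) * ((1-q*(x/q))/(1-q))))^k = q^k * ((1-(x/q))/(1-q) * ((1-q*(x/q))/(1-q)))^k"
        by (rule power_mult_distrib)
      moreover have "((q-x) * (1-x) / (1-q)^2)^k = ((q-x) * (1-x))^k / (1-q)^(2*k)"
        by (simp only: power_divide power_mult)
      ultimately have hS: "q^k * ((1-(x/q))/(1-q) * ((1-q*(x/q))/(1-q)))^k = ((q-x) * (1-x))^k / (1-q)^(2*k)" by simp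
      have "p * q^k * ((1-p*(x/q)) * ((1-(x/q))/(1-q) * ((1-q*(x/q))/(1-q)))^k)
        = (p*(1-p*(x/q))) * (q^k * ((1-(x/q))/(1-q) * ((1-q*(x/q))/(1-q)))^k)" by (simp only: mult_ac)
      also have "\<dots> = (p - x) * (((q-x) * (1-x))^k / (1-q)^(2*k))" by (simp only: e2 hS)
      finally show ?thesis by simp
    qed
    have a5: "((1-x)/(1-q) * ((1-q*x)/(1-q)))^k = ((1-q*x) * (1-x))^k / (1-q)^(2*k)"
    proof -
      have "(1-x)/(1-q) * ((1-q*x)/(1-q)) = (1-q*x) * (1-x) / (1-q)^2"
        using q0 q1 by (simp add: field_simps power2_eq_square)
      moreover have "((1-q*x) * (1-x) / (1-q)^2)^k = ((1-q*x) * (1-x))^k / (1-q)^(2*k)"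
        by (simp only: power_divide power_mult)
      ultimately show ?thesis by simp
    qed
    have b: "p^(2*m+1)*((1-p*(x/q))*((-(x/q))^(m-k) * K k * ((1-(x/q))/(1-q) * ((1-q*(x/q))/(1-q)))^k))
       = (-1)^j * x^j * K k * ((p-x) * ((q-x) * (1-x))^k / (1-q)^(2*k))"
      unfolding a2 a3 a4[symmetric] by (rule alg1q) (use q0 in simp)
    show ?thesis unfolding b a1 a5 unfolding w_def B_def j_def[symmetric]
      by (rule alg5)
  qed
  have main: "(\<Sum>k=0..m. w k * (x^(m-k) * (1-x)^k * B k x)) = g x" for x
  proof -
    have "g x = Rf x - p^(2*m+1) * Rf (x/q)" using all2 by simp
    also have "\<dots> = (\<Sum>k=0..m. w k * (x^(m-k) * (1-x)^k * B k x))"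
      unfolding Rf_def sum_distrib_left sum_subtractf[symmetric]
      by (rule sum.cong[OF refl], rule termk, simp)
    finally show ?thesis by simp
  qed
  have "(\<Sum>k=0..m. w k * (1^(m-k) * (1-1)^k * B k 1)) = w 0 * B 0 1"
  proof -
    have "(\<Sum>k=Suc 0..m. w k * (0^k * B k 1)) = 0" by (rule sum.neutral) auto
    then show ?thesis by (simp add: sum.atLeast_Suc_atMost)
  qed
  moreover have "g 1 = 0" unfolding g_def using m2 by simp
  moreover have "B 0 1 = 2 * (1-p)" unfolding B_def by simp
  ultimately have w0: "w 0 = 0" using main[of 1] p1 by simp
  define G2 where "G2 x = (1+x)/(1-q)/((1-q^2)/(1-q)) * ((1-x)^(2*m-2)/(1-q)^(2*m-1))" for x
  define H2 where "H2 x = w 1 * (x^(m-1)*(1-p*q)*(1+x)) + (\<Sum>k=2..m. w k * (x^(m-k)*(1-x)^(k-2)*B k x))" for x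
  have s2: "(1-x)^2 * H2 x = (1-x)^2 * G2 x" for x
  proof -
    have B1: "B 1 x = (1-p*q)*(1-x)*(1+x)" unfolding B_def by (simp add: algebra_simps)
    have T1: "x^(m-1) * (1-x)^1 * B 1 x = (1-x)^2 * (x^(m-1)*(1-p*q)*(1+x))"
      unfolding B1 by (simp add: power2_eq_square mult_ac)
    have Tk: "w k * (x^(m-k) * (1-x)^k * B k x) = (1-x)^2 * (w k * (x^(m-k)*(1-x)^(k-2)*B k x))"
      if "k \<in> {2..m}" for k
    proof -
      have e: "k = 2 + (k-2)" using that by auto
      have "(1-x)^k = (1-x)^2 * (1-x)^(k-2)" by (metis e power_add)
      then show ?thesis by simp
    qed
    have split: "(\<Sum>k=0..m. w k * (x^(m-k) * (1-x)^k * B k x))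
      = w 0 * (x^(m-0) * (1-x)^0 * B 0 x) + w 1 * (x^(m-1) * (1-x)^1 * B 1 x)
        + (\<Sum>k=2..m. w k * (x^(m-k) * (1-x)^k * B k x))"
    proof -
      have "{0..m} = insert 0 (insert 1 {2..m})" using m2 by auto
      then show ?thesis by simp
    qed
    have "(1-x)^2 * H2 x = (\<Sum>k=0..m. w k * (x^(m-k) * (1-x)^k * B k x))"
    proof -
      have "(\<Sum>k=2..m. w k * (x^(m-k) * (1-x)^k * B k x)) = (\<Sum>k=2..m. (1-x)^2 * (w k * (x^(m-k)*(1-x)^(k-2)*B k x)))"
        by (rule sum.cong[OF refl], rule Tk)
      then show ?thesis unfolding split w0 H2_def T1 sum_distrib_left distrib_left by simp
    qed
    also have "\<dots> = g x" by (rule main)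
    also have "\<dots> = (1-x)^2 * G2 x"
    proof -
      have e: "2*m-1 = 1 + (2*m-2)" using m2 by simp
      have "(1-x)^(2*m-1) = (1-x) * (1-x)^(2*m-2)" by (metis e power_add power_one_right)
      then show ?thesis unfolding g_def G2_def power_divide
        by (simp only: alg6)
    qed
    finally show ?thesis .
  qed
  have s2x: "H2 x = G2 x" if "x \<in> {x. x \<noteq> 1}" for x
    using s2[of x] that by simp
  have s2': "H2 1 = G2 1"
    by (rule polyfun_eq[where S="{x. x \<noteq> 1}", OF _ _ infinite_ne1 s2x])
       (unfold G2_def H2_def B_def, (intro polyfun_intros)+)
  have "H2 1 = w 1 * ((1-p*q)*2) + w 2 * B 2 1"
  proof -
    have "{2..m} = insert 2 {3..m}" using m2 by auto
    moreover have "(\<Sum>k=3..m. w k * (1^(m-k)*(1-1)^(k-2)*B k 1)) = 0" by (rule sum.neutral) auto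
    ultimately show ?thesis unfolding H2_def by simp
  qed
  moreover have "G2 1 = 0" unfolding G2_def using m2 by simp
  moreover have "B 2 1 = 2*(1-p)*(1-q)^2" unfolding B_def by (simp add: power2_eq_square algebra_simps)
  ultimately have key: "w 1 * ((1-p*q)*2) + w 2 * (2*(1-p)*(1-q)^2) = 0" using s2' by simp
  define sg :: real where "sg = (-1)^(m-2)"
  define A where "A = evalp (Q (m-1)) p"
  define Bv where "Bv = evalp (Q (m-2)) p"
  define Pi where "Pi = (\<Prod>i=0..m-2. (1 - p^(2*(m-i)+1)))"
  define Z where "Z = (1-p)^(m-2)"
  define D where "D = (1-q^2)/(1-q)"
  have mm: "m - 1 = Suc (m-2)" using m2 by simp
  have sg1: "(-1::real)^(m-1) = - sg" unfolding sg_def mm by simp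
  have sg0: "sg \<noteq> 0" unfolding sg_def by simp
  have fi: "1 - p^(2*(m-i)+1) \<noteq> 0" for i using power_Suc_less_one[OF p0 p1, of "2*(m-i)"] by simp
  have Pi0: "Pi \<noteq> 0" unfolding Pi_def using fi by (simp add: prod_zero_iff)
  have Z0: "Z \<noteq> 0" unfolding Z_def using p1 by simp
  have "q * q < q" using q0 q1 by simp
  then have "q * q < 1" using q1 by linarith
  then have D0: "D \<noteq> 0" unfolding D_def using q0 q1 by (simp add: power2_eq_square)
  have c0: "1 - p^3 \<noteq> 0" using power_Suc_less_one[OF p0 p1, of 2] by (simp add: numeral_3_eq_3)
  have Pi1: "(\<Prod>i=0..m-1. (1 - p^(2*(m-i)+1))) = Pi * (1 - p^3)"
  proof -
    have "2*(m - Suc (m-2)) + 1 = 3" using m2 by simp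
    then show ?thesis unfolding mm Pi_def by (simp add: prod.atLeast0_atMost_Suc power2_eq_square power3_eq_cube)
  qed
  have Z1: "(1-p)^(m-1) = (1-p) * Z" unfolding mm Z_def by simp
  have pq: "p*q = p^3" unfolding q_def by (simp add: power2_eq_square power3_eq_cube)
  have w1: "w 1 = - sg * ((1-p) * Z * A / (Pi * (1-p^3)) / D) / (1-q)^2"
    unfolding w_def K_def sg1 Pi1 Z1 A_def D_def by simp
  have w2: "w 2 = sg * (Z * Bv / Pi / D) / (1-q)^4"
    unfolding w_def K_def sg_def Pi_def Z_def Bv_def D_def by simp
  have "w 1 * ((1-p*q)*2) + w 2 * (2*(1-p)*(1-q)^2) = 2*sg*(1-p)*Z/(Pi*D*(1-q)^2)*(Bv - A)"
    unfolding w1 w2 pq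
    by (rule alg7) (use p1 q1 Pi0 D0 c0 Z0 in auto)
  then have "2*sg*(1-p)*Z/(Pi*D*(1-q)^2)*(Bv - A) = 0" using key by simp
  then have "Bv = A" using sg0 Pi0 D0 Z0 p1 q1 by simp
  then show ?thesis unfolding A_def Bv_def by simp
qed

theorem corollary3p4:
  fixes m :: nat
  assumes "m \<ge> 2"
  shows "Ppoly m (m - 1) = Ppoly m (m - 2) \<and> Qpoly m (m - 1) = Qpoly m (m - 2)"
proof
  have hP: "P (m-1) = P (m-2)" if "P_family m P" for P
    by (rule evalp_eq) (rule P_main[OF assms that])
  have "(\<lambda>r. \<exists>P. P_family m P \<and> P (m-1) = r) = (\<lambda>r. \<exists>P. P_family m P \<and> P (m-2) = r)"
    by (rule ext) (use hP in metis)
  then show "Ppoly m (m - 1) = Ppoly m (m - 2)" unfolding Ppoly_def by simp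
next
  have hQ: "Q (m-1) = Q (m-2)" if "Q_family m Q" for Q
    by (rule evalp_eq) (rule Q_main[OF assms that])
  have "(\<lambda>r. \<exists>Q. Q_family m Q \<and> Q (m-1) = r) = (\<lambda>r. \<exists>Q. Q_family m Q \<and> Q (m-2) = r)"
    by (rule ext) (use hQ in metis)
  then show "Qpoly m (m - 1) = Qpoly m (m - 2)" unfolding Qpoly_def by simp
qed

end
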